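(* Let $A=A^T\in\mathbb{R}^{n\times n}$, let $s$ be an integer with $1\leq s<d(A)$, and let $v_0\in\mathbb{R}^n$ with $\|v_0\|=1$ and $d(A,v_0)\geq s+1$. Consider the iteration $\widetilde v_{k+1}=P_s(A;v_k)v_k$, $v_{k+1}=\widetilde v_{k+1}/\|\widetilde v_{k+1}\|$, $k=0,1,2,\dots$, and let $\tau:=\lim_{k\to\infty}\|\widetilde v_k\|$ (this limit exists and is positive). Then every limit vector $v_*$ of the subsequence $\{v_{2k}\}$ satisfies $$(Q(A)-\tau^2 I)v_*=0,\qquad\text{where } Q(z):=P_s(z;w_* )\,P_s(z;v_* ),\quad w_*:=\frac{P_s(A;v_* )v_*}{\tau},$$ and in particular $s<d(A,v_* )\leq 2s$.
   Context: $d(A)$ is the degree of the minimal polynomial of $A$; $d(A,v)$ is the grade of $v$ w.r.t. $A$ (degree of the monic polynomial $p$ of smallest degree with $p(A)v=0$); $\mathcal{K}_k(A,v)=\mathrm{span}\{v,Av,\dots,A^{k-1}v\}$; $\mathcal{M}_s$ is the set of real monic polynomials of degree $s$; $\|\cdot\|$ is the Euclidean norm. For $v$ with $d(A,v)\geq s$, $P_s(\cdot\,;v)\in\mathcal{M}_s$ denotes the unique monic polynomial of degree $s$ such that $P_s(A;v)v\perp\mathcal{K}_s(A,v)$. (Under the hypotheses all $\widetilde v_k$ are nonzero, the sequence $\|\widetilde v_k\|$ is nondecreasing and bounded, and every limit vector $v_*$ has $d(A,v_* )\geq s+1$, $\|P_s(A;v_* )v_*\|=\tau$ and $d(A,w_*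 )\geq s$, so $Q$ is well defined.) *)

theory Defs
  imports "HOL-Analysis.Analysis" "HOL-Computational_Algebra.Polynomial"
begin

primrec mat_pow :: "real^'n^'n \<Rightarrow> nat \<Rightarrow> real^'n^'n" where
  "mat_pow A 0 = mat 1"
| "mat_pow A (Suc i) = A ** mat_pow A i"

definition poly_mat_vec :: "real poly \<Rightarrow> real^'n^'n \<Rightarrow> real^'n \<Rightarrow> real^'n" where
  "poly_mat_vec p A v = (\<Sum>i\<le>degree p. coeff p i *\<^sub>R (mat_pow A i *v v))"

definition poly_mat :: "real poly \<Rightarrow> real^'n^'n \<Rightarrow> real^'n^'n" where
  "poly_mat p A = (\<Sum>i\<le>degree p. coeff p i *\<^sub>R mat_pow A i)"

definition monic :: "real poly \<Rightarrow> bool" where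
  "monic p \<longleftrightarrow> lead_coeff p = 1"

definition min_poly_deg :: "real^'n^'n \<Rightarrow> nat" where
  "min_poly_deg A = (LEAST k. \<exists>p. monic p \<and> degree p = k \<and> poly_mat p A = 0)"

definition grade :: "real^'n^'n \<Rightarrow> real^'n \<Rightarrow> nat" where
  "grade A v = (LEAST k. \<exists>p. monic p \<and> degree p = k \<and> poly_mat_vec p A v = 0)"

definition krylov :: "real^'n^'n \<Rightarrow> real^'n \<Rightarrow> nat \<Rightarrow> (real^'n) set" where
  "krylov A v k = span {mat_pow A i *v v | i. i < k}"

definition P_s :: "nat \<Rightarrow> real^'n^'n \<Rightarrow> real^'n \<Rightarrow> real poly" where
  "P_s s A v = (THE p. monic p \<and> degree p = s \<and>
      (\<forall>u\<in>krylov A v s. inner u (poly_mat_vec p A v) = 0))"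

primrec iter_v :: "real^'n^'n \<Rightarrow> nat \<Rightarrow> real^'n \<Rightarrow> nat \<Rightarrow> real^'n" where
  "iter_v A s v0 0 = v0"
| "iter_v A s v0 (Suc k) =
     (let w = poly_mat_vec (P_s s A (iter_v A s v0 k)) A (iter_v A s v0 k)
      in (1 / norm w) *\<^sub>R w)"

text \<open>iter_vt A s v0 k = \<open>\<tilde>v\<^sub>k\<^sub>+\<^sub>1\<close> = P_s(A;v_k) v_k.\<close>
definition iter_vt :: "real^'n^'n \<Rightarrow> nat \<Rightarrow> real^'n \<Rightarrow> nat \<Rightarrow> real^'n" where
  "iter_vt A s v0 k = poly_mat_vec (P_s s A (iter_v A s v0 k)) A (iter_v A s v0 k)"

end

theory Submission
  imports Defs
begin


lemma pmv_sum_le: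
  assumes "degree p \<le> N"
  shows "poly_mat_vec p A v = (\<Sum>i\<le>N. coeff p i *\<^sub>R (mat_pow A i *v v))"
  unfolding poly_mat_vec_def
  by (rule sum.mono_neutral_left) (use assms in \<open>auto simp: coeff_eq_0\<close>)

lemma pmv_0[simp]: "poly_mat_vec 0 A v = 0"
  by (simp add: poly_mat_vec_def)

lemma mat_pow_Suc_vec: "mat_pow A (Suc i) *v v = A *v (mat_pow A i *v v)"
  by (simp add: matrix_vector_mul_assoc)

lemma pmv_pCons: "poly_mat_vec (pCons a p) A v = a *\<^sub>R v + A *v poly_mat_vec p A v"
proof -
  have "poly_mat_vec (pCons a p) A v = (\<Sum>i\<le>Suc (degree p). coeff (pCons a p) i *\<^sub>R (mat_pow A i *v v))"
    by (rule pmv_sum_le) (simp add: degree_pCons_le)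
  also have "\<dots> = a *\<^sub>R v + (\<Sum>i\<le>degree p. coeff p i *\<^sub>R (mat_pow A (Suc i) *v v))"
    by (subst sum.atMost_Suc_shift) simp
  also have "(\<Sum>i\<le>degree p. coeff p i *\<^sub>R (mat_pow A (Suc i) *v v)) = A *v poly_mat_vec p A v"
    unfolding poly_mat_vec_def mat_pow_Suc_vec
    by (simp add: matrix_vector_mult_scaleR vec.sum)
  finally show ?thesis .
qed

lemma pmv_add: "poly_mat_vec (p + q) A v = poly_mat_vec p A v + poly_mat_vec q A v"
proof (induction p arbitrary: q rule: pCons_induct)
  case 0 then show ?case by simp
next
  case (pCons a p)
  show ?case
  proof (cases q rule: pCons_cases)
    case (pCons b q')
    then show ?thesis using pCons.IH[of q']
      by (simp add: pmv_pCons matrix_vector_right_distrib algebra_simps)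
  qed
qed

lemma pmv_smult: "poly_mat_vec (smult c p) A v = c *\<^sub>R poly_mat_vec p A v"
  by (induction p rule: pCons_induct) (simp_all add: pmv_pCons matrix_vector_mult_scaleR scaleR_add_right)

lemma pmv_neg: "poly_mat_vec (- p) A v = - poly_mat_vec p A v"
  using pmv_smult[of "-1" p A v] by simp

lemma pmv_diff: "poly_mat_vec (p - q) A v = poly_mat_vec p A v - poly_mat_vec q A v"
  using pmv_add[of p "-q" A v] pmv_neg[of q A v] by simp

lemma pmv_vadd: "poly_mat_vec p A (x + y) = poly_mat_vec p A x + poly_mat_vec p A y"
  by (induction p rule: pCons_induct) (simp_all add: pmv_pCons matrix_vector_right_distrib algebra_simps)

lemma pmv_vscale: "poly_mat_vec p A (c *\<^sub>R x) = c *\<^sub>R poly_mat_vec p A x"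
  by (induction p rule: pCons_induct) (simp_all add: pmv_pCons matrix_vector_mult_scaleR algebra_simps)

lemma pmv_vzero[simp]: "poly_mat_vec p A 0 = 0"
  using pmv_vscale[of p A 0 0] by simp

lemma pmv_vdiff: "poly_mat_vec p A (x - y) = poly_mat_vec p A x - poly_mat_vec p A y"
  using pmv_vadd[of p A "x - y" y] by simp

lemma pmv_const[simp]: "poly_mat_vec [:c:] A v = c *\<^sub>R v"
  by (simp add: pmv_pCons)

lemma pmv_pCons0: "poly_mat_vec (pCons 0 p) A v = A *v poly_mat_vec p A v"
  by (simp add: pmv_pCons)

lemma pmv_mult: "poly_mat_vec (p * q) A v = poly_mat_vec p A (poly_mat_vec q A v)"
proof (induction p rule: pCons_induct)
  case 0 then show ?case by simp
next
  case (pCons a p)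
  have "pCons a p * q = smult a q + pCons 0 (p * q)" by (simp add: mult_pCons_left)
  then show ?case using pCons.IH by (simp add: pmv_add pmv_smult pmv_pCons0 pmv_pCons)
qed

lemma pmv_monom: "poly_mat_vec (monom c i) A v = c *\<^sub>R (mat_pow A i *v v)"
proof (induction i)
  case 0 then show ?case by (simp add: monom_0)
next
  case (Suc i)
  then show ?case by (simp add: monom_Suc pmv_pCons0 matrix_vector_mul_assoc matrix_vector_mult_scaleR)
qed

lemma pmv_commA: "poly_mat_vec p A (A *v v) = A *v poly_mat_vec p A v"
  by (induction p rule: pCons_induct) (simp_all add: pmv_pCons matrix_vector_right_distrib matrix_vector_mult_scaleR)

lemma symm_inner:
  fixes A :: "real^'n^'n"
  assumes "transpose A = A"
  shows "inner (A *v x) y = inner x (A *v y)"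
proof -
  have "inner (A *v x) y = inner (x v* transpose A) y" by simp
  also have "\<dots> = inner (x v* A) y" using assms by simp
  also have "\<dots> = inner x (A *v y)" by (rule dot_lmul_matrix)
  finally show ?thesis .
qed

lemma pmv_symm:
  fixes A :: "real^'n^'n"
  assumes "transpose A = A"
  shows "inner (poly_mat_vec p A x) y = inner x (poly_mat_vec p A y)"
proof (induction p arbitrary: x y rule: pCons_induct)
  case 0 then show ?case by simp
next
  case (pCons a p)
  show ?case
    by (simp add: pmv_pCons inner_add_left inner_add_right symm_inner[OF assms] pCons.IH pmv_commA[symmetric])
qed

lemma pmv_tendsto:
  fixes A :: "real^'n^'n"
  assumes "X \<longlonglongrightarrow> x"
  shows "(\<lambda>k. poly_mat_vec p A (X k)) \<longlonglongrightarrow> poly_mat_vec p A x"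
proof (induction p rule: pCons_induct)
  case 0 then show ?case by simp
next
  case (pCons a p)
  have "(\<lambda>k. A *v poly_mat_vec p A (X k)) \<longlonglongrightarrow> A *v poly_mat_vec p A x"
    using bounded_linear.tendsto[OF matrix_vector_mul_bounded_linear pCons.IH] .
  then show ?case unfolding pmv_pCons by (intro tendsto_intros assms)
qed



lemma krylov_orth_iff:
  "(\<forall>u\<in>krylov A v s. inner u w = 0) \<longleftrightarrow> (\<forall>i<s. inner (mat_pow A i *v v) w = 0)"
proof
  assume "\<forall>u\<in>krylov A v s. inner u w = 0"
  then show "\<forall>i<s. inner (mat_pow A i *v v) w = 0"
    unfolding krylov_def by (auto intro!: span_base)
next
  assume H: "\<forall>i<s. inner (mat_pow A i *v v) w = 0"
  show "\<forall>u\<in>krylov A v s. inner u w = 0"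
  proof
    fix u assume "u \<in> krylov A v s"
    then have "u \<in> span {mat_pow A i *v v | i. i < s}" by (simp add: krylov_def)
    then show "inner u w = 0"
    proof (induction rule: span_induct)
      case base
      show ?case by (auto simp: subspace_def inner_add_left)
    next
      case (step x) then show ?case using H by auto
    qed
  qed
qed

lemma pmv_in_krylov:
  assumes "degree r < s"
  shows "poly_mat_vec r A v \<in> krylov A v s"
proof -
  have eq: "poly_mat_vec r A v = (\<Sum>i\<le>degree r. coeff r i *\<^sub>R (mat_pow A i *v v))"
    by (simp add: poly_mat_vec_def)
  have "(\<Sum>i\<le>degree r. coeff r i *\<^sub>R (mat_pow A i *v v)) \<in> krylov A v s"
    unfolding krylov_def
  proof (rule span_sum)
    fix i assume "i \<in> {..degree r}"
    then have "mat_pow A i *v v \<in> {mat_pow A i *v v | i. i < s}" using assms by auto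
    then show "coeff r i *\<^sub>R (mat_pow A i *v v) \<in> span {mat_pow A i *v v | i. i < s}"
      by (intro span_scale span_base)
  qed
  then show ?thesis using eq by simp
qed

lemma krylov_poly:
  assumes "y \<in> krylov A v s" "1 \<le> s"
  shows "\<exists>r. degree r < s \<and> y = poly_mat_vec r A v"
proof -
  have "y \<in> span {mat_pow A i *v v | i. i < s}" using assms by (simp add: krylov_def)
  then show ?thesis
  proof (induction rule: span_induct)
    case base
    have z: "\<exists>r. degree r < s \<and> 0 = poly_mat_vec r A v"
      by (rule exI[of _ 0]) (use assms in simp)
    have a: "\<exists>r. degree r < s \<and> x + y = poly_mat_vec r A v"
      if h1: "\<exists>r. degree r < s \<and> x = poly_mat_vec r A v" and h2: "\<exists>r. degree r < s \<and> y = poly_mat_vec r A v" for x y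
    proof -
      obtain r1 r2 where "degree r1 < s" "x = poly_mat_vec r1 A v" "degree r2 < s" "y = poly_mat_vec r2 A v"
        using h1 h2 by blast
      then show ?thesis
        by (intro exI[of _ "r1 + r2"]) (auto simp: pmv_add intro: le_less_trans[OF degree_add_le_max])
    qed
    have m: "\<exists>r. degree r < s \<and> c *\<^sub>R x = poly_mat_vec r A v"
      if h1: "\<exists>r. degree r < s \<and> x = poly_mat_vec r A v" for c x
    proof -
      obtain r1 where "degree r1 < s" "x = poly_mat_vec r1 A v" using h1 by blast
      then show ?thesis
        by (intro exI[of _ "smult c r1"]) (auto simp: pmv_smult intro: le_less_trans[OF degree_smult_le])
    qed
    show ?case unfolding subspace_def Ball_def mem_Collect_eq
      by (intro conjI allI impI z a m) assumption+
  next
    case (step x)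
    then obtain i where "i < s" "x = mat_pow A i *v v" by blast
    then show ?case by (intro exI[of _ "monom 1 i"]) (simp add: pmv_monom degree_monom_eq)
  qed
qed

definition P_good :: "nat \<Rightarrow> real^'n^'n \<Rightarrow> real^'n \<Rightarrow> real poly \<Rightarrow> bool" where
  "P_good s A v p \<longleftrightarrow> monic p \<and> degree p = s \<and>
      (\<forall>u\<in>krylov A v s. inner u (poly_mat_vec p A v) = 0)"

lemma P_exists:
  fixes A :: "real^'n^'n"
  assumes "1 \<le> s"
  shows "\<exists>p. P_good s A v p"
proof -
  obtain y z where y: "y \<in> span {mat_pow A i *v v | i. i < s}"
    and z: "\<And>w. w \<in> span {mat_pow A i *v v | i. i < s} \<Longrightarrow> orthogonal z w"
    and xyz: "mat_pow A s *v v = y + z"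
    using orthogonal_subspace_decomp_exists by blast
  obtain r where r: "degree r < s" "y = poly_mat_vec r A v"
    using krylov_poly[of y A v s] y assms by (auto simp: krylov_def)
  define p where "p = monom 1 s - r"
  have dp: "degree p = s"
  proof -
    have "degree (monom (1::real) s + (- r)) = s"
      by (subst degree_add_eq_left) (use r(1) in \<open>simp_all add: degree_monom_eq\<close>)
    then show ?thesis unfolding p_def by simp
  qed
  have lp: "lead_coeff p = 1"
    using dp r(1) unfolding p_def by (simp add: coeff_eq_0)
  have pz: "poly_mat_vec p A v = z"
    unfolding p_def using xyz r by (simp add: pmv_diff pmv_monom)
  show ?thesis
    unfolding P_good_def monic_def
    using z dp lp pz by (intro exI[of _ p]) (auto simp: krylov_def orthogonal_def inner_commute)
qed

definition nokill :: "real^'n^'n \<Rightarrow> nat \<Rightarrow> real^'n \<Rightarrow> bool" where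
  "nokill A s v \<longleftrightarrow> (\<forall>q. monic q \<longrightarrow> degree q = s \<longrightarrow> poly_mat_vec q A v \<noteq> 0)"

lemma nokill_nonzero:
  assumes "nokill A s v" "r \<noteq> 0" "degree r \<le> s"
  shows "poly_mat_vec r A v \<noteq> 0"
proof
  assume H: "poly_mat_vec r A v = 0"
  define q where "q = monom (1 / lead_coeff r) (s - degree r) * r"
  have lc: "lead_coeff r \<noteq> 0" using assms(2) by simp
  have lc': "1 / lead_coeff r \<noteq> 0" using lc by simp
  have mq: "monic q" unfolding q_def monic_def using lc by (simp add: lead_coeff_mult lead_coeff_monom degree_monom_eq[OF lc'])
  have dm: "degree (monom (1/lead_coeff r) (s - degree r)) = s - degree r" using degree_monom_eq[OF lc'] .
  have mz: "monom (1/lead_coeff r) (s - degree r) \<noteq> 0" using lc' by simp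
  have "degree q = degree (monom (1/lead_coeff r) (s - degree r)) + degree r"
    unfolding q_def using mz assms(2) by (rule degree_mult_eq)
  then have "degree q = s" using dm assms(3) by simp
  moreover
  moreover have "poly_mat_vec q A v = 0" unfolding q_def by (simp add: pmv_mult H)
  ultimately show False using assms(1) mq unfolding nokill_def by blast
qed

lemma monic_diff_deg:
  assumes "monic p" "monic q" "degree p = s" "degree q = s" "1 \<le> s"
  shows "degree (p - q) < s"
proof -
  have le: "degree (p - q) \<le> s" using assms by (simp add: degree_diff_le)
  have c: "coeff (p - q) s = 0" using assms by (simp add: monic_def)
  show ?thesis
  proof (cases "p - q = 0")
    case True then show ?thesis using assms(5) by simp
  next
    case False
    then have "degree (p - q) \<noteq> s" using c by (metis leading_coeff_0_iff)
    then show ?thesis using le by simp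
  qed
qed

lemma P_unique:
  assumes "nokill A s v" "1 \<le> s" "P_good s A v p" "P_good s A v q"
  shows "p = q"
proof (rule ccontr)
  assume ne: "p \<noteq> q"
  let ?d = "p - q"
  have dd: "degree ?d < s" using assms(2-4) monic_diff_deg unfolding P_good_def by blast
  have kr: "poly_mat_vec ?d A v \<in> krylov A v s" using pmv_in_krylov[OF dd] .
  have "inner (poly_mat_vec ?d A v) (poly_mat_vec ?d A v) = 0"
    using assms(3,4) kr unfolding P_good_def by (simp add: pmv_diff inner_diff_right)
  then have "poly_mat_vec ?d A v = 0" by simp
  moreover have "poly_mat_vec ?d A v \<noteq> 0"
    using nokill_nonzero[OF assms(1)] ne dd by simp
  ultimately show False by simp
qed

lemma P_s_good:
  assumes "nokill A s v" "1 \<le> s"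
  shows "P_good s A v (P_s s A v)"
proof -
  have "\<exists>!p. P_good s A v p" using P_exists[OF assms(2)] P_unique[OF assms] by blast
  then have "P_good s A v (THE p. P_good s A v p)" by (rule theI')
  then show ?thesis by (simp add: P_s_def P_good_def)
qed

lemma P_s_eq:
  assumes "nokill A s v" "1 \<le> s" "P_good s A v p"
  shows "P_s s A v = p"
  using P_unique[OF assms(1,2) P_s_good[OF assms(1,2)] assms(3)] .

lemma P_good_inner:
  assumes "P_good s A v p" "monic q" "degree q = s" "1 \<le> s"
  shows "inner (poly_mat_vec p A v) (poly_mat_vec q A v) = (norm (poly_mat_vec p A v))^2"
proof -
  have "degree (q - p) < s" using assms monic_diff_deg unfolding P_good_def by blast
  then have "inner (poly_mat_vec (q - p) A v) (poly_mat_vec p A v) = 0"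
    using assms(1) pmv_in_krylov unfolding P_good_def by blast
  then have "inner (poly_mat_vec q A v) (poly_mat_vec p A v) - inner (poly_mat_vec p A v) (poly_mat_vec p A v) = 0"
    by (simp add: pmv_diff inner_diff_left)
  then show ?thesis
    by (simp add: inner_commute power2_norm_eq_inner)
qed

lemma P_good_min:
  assumes "P_good s A v p" "monic q" "degree q = s" "1 \<le> s"
  shows "norm (poly_mat_vec p A v) \<le> norm (poly_mat_vec q A v)"
proof -
  have "(norm (poly_mat_vec p A v))^2 = inner (poly_mat_vec p A v) (poly_mat_vec q A v)"
    using P_good_inner[OF assms] by simp
  also have "\<dots> \<le> norm (poly_mat_vec p A v) * norm (poly_mat_vec q A v)"
    by (rule Cauchy_Schwarz_ineq2[THEN order_trans[OF abs_ge_self]])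
  finally have h: "norm (poly_mat_vec p A v) * norm (poly_mat_vec p A v) \<le> norm (poly_mat_vec p A v) * norm (poly_mat_vec q A v)"
    by (simp add: power2_eq_square)
  show ?thesis
  proof (cases "norm (poly_mat_vec p A v) = 0")
    case True then show ?thesis by simp
  next
    case False then have "norm (poly_mat_vec p A v) > 0" by simp
    then show ?thesis using h by (simp add: mult_le_cancel_left_pos)
  qed
qed



lemma A_bound_exists:
  fixes A :: "real^'n^'n"
  shows "\<exists>K\<ge>1. \<forall>x. norm (A *v x) \<le> K * norm x"
proof -
  obtain K where K: "K > 0" "\<And>x. norm (A *v x) \<le> norm x * K"
    using bounded_linear.pos_bounded[OF matrix_vector_mul_bounded_linear[of A]] by blast
  show ?thesis
  proof (intro exI[of _ "max 1 K"] conjI allI)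
    fix x
    have "norm (A *v x) \<le> norm x * K" by (rule K(2))
    also have "\<dots> \<le> norm x * max 1 K" by (rule mult_left_mono) auto
    also have "\<dots> = max 1 K * norm x" by simp
    finally show "norm (A *v x) \<le> max 1 K * norm x" .
  qed simp
qed

lemma mat_pow_bound:
  fixes A :: "real^'n^'n"
  assumes Kb: "\<forall>x. norm (A *v x) \<le> K * norm x" and K0: "0 \<le> K"
  shows "norm (mat_pow A i *v x) \<le> K ^ i * norm x"
proof (induction i)
  case 0 then show ?case by simp
next
  case (Suc i)
  have "norm (mat_pow A (Suc i) *v x) = norm (A *v (mat_pow A i *v x))"
    by (simp add: matrix_vector_mul_assoc)
  also have "\<dots> \<le> K * norm (mat_pow A i *v x)" using Kb by blast
  also have "\<dots> \<le> K * (K ^ i * norm x)" using Suc K0 by (simp add: mult_left_mono)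
  finally show ?case by simp
qed

lemma monom_bound:
  fixes A :: "real^'n^'n"
  assumes Kb: "\<forall>x. norm (A *v x) \<le> K * norm x" and K0: "0 \<le> K"
  shows "norm (poly_mat_vec (monom c j) A x) \<le> \<bar>c\<bar> * K ^ j * norm x"
  using mat_pow_bound[OF Kb K0, of j x] by (simp add: pmv_monom mult_left_mono mult.assoc)

fun bnd :: "real \<Rightarrow> real \<Rightarrow> nat \<Rightarrow> real \<Rightarrow> real" where
  "bnd L M 0 C = L * C"
| "bnd L M (Suc d) C = max (L * C) (bnd L M d (C + L * C * M))"

lemma degree_le_pred:
  assumes "degree p \<le> Suc d" "coeff p (Suc d) = 0"
  shows "degree p \<le> d"
proof (rule ccontr)
  assume "\<not> degree p \<le> d"
  then have "degree p = Suc d" using assms(1) by simp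
  then have "p = 0" using assms(2) by (metis leading_coeff_0_iff)
  then show False using \<open>degree p = Suc d\<close> by simp
qed

context
  fixes A :: "real^'n^'n" and K \<delta> :: real and s :: nat and u :: "real^'n"
  assumes Kb: "\<forall>x. norm (A *v x) \<le> K * norm x" and K1: "1 \<le> K" and dpos: "0 < \<delta>"
    and LB: "\<forall>q. monic q \<longrightarrow> degree q = s \<longrightarrow> \<delta> \<le> norm (poly_mat_vec q A u)"
    and un: "norm u = 1"
begin

lemma lead_bound:
  assumes "degree r \<le> d" "d < s" "norm (poly_mat_vec r A u) \<le> C"
  shows "\<bar>coeff r d\<bar> \<le> K ^ s / \<delta> * C"
proof (cases "coeff r d = 0")
  case True
  have "0 \<le> C" using assms(3) norm_ge_zero order_trans by blast
  then show ?thesis using True dpos K1 by simp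
next
  case False
  let ?c = "coeff r d"
  have rd: "degree r = d" using False assms(1) le_degree by (metis le_antisym)
  have r0: "r \<noteq> 0" using False by auto
  have lc': "1 / ?c \<noteq> 0" using False by simp
  define q where "q = monom (1 / ?c) (s - d) * r"
  have mz: "monom (1 / ?c) (s - d) \<noteq> 0" using lc' by simp
  have "degree q = degree (monom (1 / ?c) (s - d)) + degree r"
    unfolding q_def using mz r0 by (rule degree_mult_eq)
  then have dq: "degree q = s" using rd assms(2) degree_monom_eq[OF lc'] by simp
  have mq: "monic q" unfolding q_def monic_def using False rd
    by (simp add: lead_coeff_mult lead_coeff_monom degree_monom_eq[OF lc'])
  have "\<delta> \<le> norm (poly_mat_vec q A u)" using LB mq dq by blast
  also have "poly_mat_vec q A u = poly_mat_vec (monom (1 / ?c) (s - d)) A (poly_mat_vec r A u)"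
    unfolding q_def by (simp add: pmv_mult)
  also have "norm \<dots> \<le> \<bar>1 / ?c\<bar> * K ^ (s - d) * norm (poly_mat_vec r A u)"
    by (rule monom_bound[OF Kb]) (use K1 in simp)
  also have "\<dots> \<le> \<bar>1 / ?c\<bar> * K ^ s * C"
  proof (rule mult_mono)
    show "\<bar>1 / ?c\<bar> * K ^ (s - d) \<le> \<bar>1 / ?c\<bar> * K ^ s"
      by (rule mult_left_mono) (use K1 in \<open>simp_all add: power_increasing\<close>)
  qed (use assms(3) K1 in auto)
  finally have "\<delta> \<le> K ^ s * C / \<bar>?c\<bar>" by simp
  then have "\<delta> * \<bar>?c\<bar> \<le> K ^ s * C" using False by (simp add: field_simps)
  then show ?thesis using dpos by (simp add: field_simps)
qed

lemma coeff_bound_aux: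
  "\<forall>r C. degree r \<le> d \<longrightarrow> d < s \<longrightarrow> norm (poly_mat_vec r A u) \<le> C \<longrightarrow>
     (\<forall>i\<le>d. \<bar>coeff r i\<bar> \<le> bnd (K ^ s / \<delta>) (K ^ s) d C)"
proof (induction d)
  case 0
  show ?case using lead_bound[of _ 0] by auto
next
  case (Suc d)
  show ?case
  proof (intro allI impI)
    fix r C i
    assume dr: "degree r \<le> Suc d" and ds: "Suc d < s" and nr: "norm (poly_mat_vec r A u) \<le> C" and i: "i \<le> Suc d"
    let ?c = "coeff r (Suc d)"
    let ?L = "K ^ s / \<delta>"
    have lb: "\<bar>?c\<bar> \<le> ?L * C" by (rule lead_bound[OF dr ds nr])
    define r' where "r' = r - monom ?c (Suc d)"
    have dr': "degree r' \<le> d"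
      by (rule degree_le_pred) (use dr in \<open>simp_all add: r'_def degree_diff_le degree_monom_le\<close>)
    have "norm (poly_mat_vec r' A u) \<le> norm (poly_mat_vec r A u) + norm (poly_mat_vec (monom ?c (Suc d)) A u)"
      unfolding r'_def pmv_diff by (rule norm_triangle_ineq4)
    also have "\<dots> \<le> C + \<bar>?c\<bar> * K ^ (Suc d) * 1"
      using nr monom_bound[OF Kb, of ?c "Suc d" u] K1 un by simp
    also have "\<dots> \<le> C + ?L * C * K ^ s"
    proof -
      have "K ^ Suc d \<le> K ^ s" using K1 ds by (intro power_increasing) auto
      then have "\<bar>?c\<bar> * K ^ Suc d \<le> ?L * C * K ^ s"
        using lb by (intro mult_mono) (use K1 in auto)
      then show ?thesis by simp
    qed
    finally have nr': "norm (poly_mat_vec r' A u) \<le> C + ?L * C * K ^ s" .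
    show "\<bar>coeff r i\<bar> \<le> bnd ?L (K ^ s) (Suc d) C"
    proof (cases "i = Suc d")
      case True then show ?thesis using lb by simp
    next
      case False
      then have "i \<le> d" using i by simp
      then have "\<bar>coeff r' i\<bar> \<le> bnd ?L (K ^ s) d (C + ?L * C * K ^ s)"
        using Suc.IH dr' ds nr' by simp
      moreover have "coeff r' i = coeff r i" using False by (simp add: r'_def coeff_monom)
      ultimately show ?thesis by simp
    qed
  qed
qed

end



lemma iter_v_Suc': "iter_v A s v0 (Suc k) = (1 / norm (iter_vt A s v0 k)) *\<^sub>R iter_vt A s v0 k"
  by (simp add: iter_vt_def Let_def)

lemma monom1_monic: "monic (monom 1 s)" "degree (monom (1::real) s) = s"
  by (simp_all add: monic_def degree_monom_eq)

context
  fixes A :: "real^'n^'n" and s :: nat and v0 :: "real^'n"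
  assumes symm: "transpose A = A" and s1: "1 \<le> s" and v0n: "norm v0 = 1"
    and v0k: "nokill A s v0"
begin

lemma T_eq: "iter_vt A s v0 k = poly_mat_vec (P_s s A (iter_v A s v0 k)) A (iter_v A s v0 k)"
  by (simp add: iter_vt_def)

lemma step_props:
  assumes "norm (iter_v A s v0 k) = 1" "nokill A s (iter_v A s v0 k)"
  shows "iter_vt A s v0 k \<noteq> 0"
    and "iter_vt A s v0 k = norm (iter_vt A s v0 k) *\<^sub>R iter_v A s v0 (Suc k)"
    and "\<And>q. monic q \<Longrightarrow> degree q = s \<Longrightarrow>
       (norm (iter_vt A s v0 k))\<^sup>2 = norm (iter_vt A s v0 k) * inner (poly_mat_vec q A (iter_v A s v0 (Suc k))) (iter_v A s v0 k)"
proof -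
  let ?v = "iter_v A s v0 k" and ?t = "iter_vt A s v0 k"
  have g: "P_good s A ?v (P_s s A ?v)" by (rule P_s_good[OF assms(2) s1])
  show t0: "?t \<noteq> 0" using g assms(2) unfolding P_good_def nokill_def T_eq by blast
  show tv: "?t = norm ?t *\<^sub>R iter_v A s v0 (Suc k)" unfolding iter_v_Suc' using t0 by (simp del: iter_v.simps)
  fix q assume q: "monic q" "degree q = s"
  have "(norm ?t)\<^sup>2 = inner ?t (poly_mat_vec q A ?v)"
    unfolding T_eq using P_good_inner[OF g q s1] by simp
  also have "\<dots> = inner (poly_mat_vec q A ?t) ?v"
    using pmv_symm[OF symm, of q ?t ?v] by simp
  also have "\<dots> = norm ?t * inner (poly_mat_vec q A (iter_v A s v0 (Suc k))) ?v"
    by (subst tv) (simp add: pmv_vscale)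
  finally show "(norm ?t)\<^sup>2 = norm ?t * inner (poly_mat_vec q A (iter_v A s v0 (Suc k))) ?v" .
qed

lemma inv_all: "norm (iter_v A s v0 k) = 1 \<and> nokill A s (iter_v A s v0 k)"
proof (induction k)
  case 0 then show ?case using v0n v0k by simp
next
  case (Suc k)
  have t0: "iter_vt A s v0 k \<noteq> 0" using step_props(1) Suc by blast
  have n1: "norm (iter_v A s v0 (Suc k)) = 1" unfolding iter_v_Suc' using t0 by (simp del: iter_v.simps)
  have "nokill A s (iter_v A s v0 (Suc k))"
    unfolding nokill_def
  proof (intro allI impI)
    fix q assume q: "monic q" "degree q = s"
    show "poly_mat_vec q A (iter_v A s v0 (Suc k)) \<noteq> 0"
    proof
      assume "poly_mat_vec q A (iter_v A s v0 (Suc k)) = 0"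
      then have "(norm (iter_vt A s v0 k))\<^sup>2 = 0" using step_props(3)[OF _ _ q] Suc by simp
      then show False using t0 by simp
    qed
  qed
  then show ?case using n1 by simp
qed

lemma vn: "norm (iter_v A s v0 k) = 1" using inv_all by blast
lemma vk: "nokill A s (iter_v A s v0 k)" using inv_all by blast
lemma tnz: "iter_vt A s v0 k \<noteq> 0" using step_props(1)[OF vn vk] .
lemma good: "P_good s A (iter_v A s v0 k) (P_s s A (iter_v A s v0 k))" by (rule P_s_good[OF vk s1])
lemma tv: "iter_vt A s v0 k = norm (iter_vt A s v0 k) *\<^sub>R iter_v A s v0 (Suc k)"
  using step_props(2)[OF vn vk] .

lemma t_min: "monic q \<Longrightarrow> degree q = s \<Longrightarrow> norm (iter_vt A s v0 k) \<le> norm (poly_mat_vec q A (iter_v A s v0 k))"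
  unfolding T_eq using P_good_min[OF good] s1 by blast

lemma t_inner: "norm (iter_vt A s v0 k) = inner (iter_vt A s v0 (Suc k)) (iter_v A s v0 k)"
proof -
  let ?q = "P_s s A (iter_v A s v0 (Suc k))"
  have q: "monic ?q" "degree ?q = s" using good[of "Suc k"] unfolding P_good_def by auto
  have "(norm (iter_vt A s v0 k))\<^sup>2 = norm (iter_vt A s v0 k) * inner (iter_vt A s v0 (Suc k)) (iter_v A s v0 k)"
    using step_props(3)[OF vn vk q] by (simp add: T_eq)
  then show ?thesis using tnz[of k] by (simp add: power2_eq_square)
qed

lemma t_mono: "norm (iter_vt A s v0 k) \<le> norm (iter_vt A s v0 (Suc k))"
proof -
  have "norm (iter_vt A s v0 k) = inner (iter_vt A s v0 (Suc k)) (iter_v A s v0 k)" by (rule t_inner)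
  also have "\<dots> \<le> norm (iter_vt A s v0 (Suc k)) * norm (iter_v A s v0 k)" by (rule norm_cauchy_schwarz)
  finally have "norm (iter_vt A s v0 k) \<le> norm (iter_vt A s v0 (Suc k)) * norm (iter_v A s v0 k)" .
  then show ?thesis using vn by simp
qed

lemma t_incseq: "incseq (\<lambda>k. norm (iter_vt A s v0 k))"
  using t_mono by (simp add: incseq_Suc_iff)

lemma t_bound: "\<exists>B. \<forall>k. norm (iter_vt A s v0 k) \<le> B"
proof -
  obtain K where K: "K \<ge> 1" "\<forall>x. norm (A *v x) \<le> K * norm x" using A_bound_exists by blast
  have "norm (iter_vt A s v0 k) \<le> K ^ s" for k
  proof -
    have "norm (iter_vt A s v0 k) \<le> norm (poly_mat_vec (monom 1 s) A (iter_v A s v0 k))"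
      using t_min monom1_monic by blast
    also have "\<dots> \<le> \<bar>1\<bar> * K ^ s * norm (iter_v A s v0 k)"
      by (rule monom_bound) (use K in auto)
    finally show ?thesis using vn by simp
  qed
  then show ?thesis by blast
qed

lemma t_conv: "(\<lambda>k. norm (iter_vt A s v0 k)) \<longlonglongrightarrow> lim (\<lambda>k. norm (iter_vt A s v0 k))"
proof -
  obtain B where B: "\<forall>k. norm (iter_vt A s v0 k) \<le> B" using t_bound by blast
  have "Bseq (\<lambda>k. norm (iter_vt A s v0 k))"
    using B by (intro BseqI'[of _ B]) simp
  then have "convergent (\<lambda>k. norm (iter_vt A s v0 k))"
    using t_incseq Bseq_mono_convergent by (metis incseq_def)
  then show ?thesis by (simp add: convergent_LIMSEQ_iff)
qed

lemma tau_ge: "norm (iter_vt A s v0 k) \<le> lim (\<lambda>k. norm (iter_vt A s v0 k))"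
  using incseq_le[OF t_incseq t_conv] by blast

lemma tau_pos: "0 < lim (\<lambda>k. norm (iter_vt A s v0 k))"
proof -
  have "0 < norm (iter_vt A s v0 0)" using tnz[of 0] by simp
  then show ?thesis using tau_ge[of 0] by linarith
qed

end



declare iter_v.simps(2)[simp del]

lemma subseq_coords:
  fixes X :: "nat \<Rightarrow> nat \<Rightarrow> real"
  assumes "\<forall>k i. i < m \<longrightarrow> \<bar>X k i\<bar> \<le> B"
  shows "\<exists>r. strict_mono r \<and> (\<forall>i<m. \<exists>l. (\<lambda>k. X (r k) i) \<longlonglongrightarrow> l)"
  using assms
proof (induction m)
  case 0 show ?case by (intro exI[of _ id]) (simp add: strict_mono_def)
next
  case (Suc m)
  then obtain r where r: "strict_mono r" "\<forall>i<m. \<exists>l. (\<lambda>k. X (r k) i) \<longlonglongrightarrow> l" by auto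
  have "bounded (range (\<lambda>k. X (r k) m))"
    using Suc.prems by (intro boundedI[of _ B]) auto
  then obtain l r' where r': "strict_mono r'" "((\<lambda>k. X (r k) m) \<circ> r') \<longlonglongrightarrow> l"
    using bounded_imp_convergent_subsequence by blast
  show ?case
  proof (intro exI[of _ "r \<circ> r'"] conjI allI impI)
    show "strict_mono (r \<circ> r')" using r(1) r'(1) by (rule strict_mono_o)
  next
    fix i assume "i < Suc m"
    show "\<exists>l. (\<lambda>k. X ((r \<circ> r') k) i) \<longlonglongrightarrow> l"
    proof (cases "i = m")
      case True then show ?thesis using r'(2) by (auto simp: o_def)
    next
      case False
      then have "i < m" using \<open>i < Suc m\<close> by simp
      then obtain l' where "(\<lambda>k. X (r k) i) \<longlonglongrightarrow> l'" using r(2) by blast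
      from LIMSEQ_subseq_LIMSEQ[OF this r'(1)] show ?thesis by (auto simp: o_def)
    qed
  qed
qed

lemma pmv_tendsto_joint:
  fixes A :: "real^'n^'n"
  assumes "\<forall>k. degree (p k) \<le> N" "degree p0 \<le> N"
    "\<forall>i\<le>N. (\<lambda>k. coeff (p k) i) \<longlonglongrightarrow> coeff p0 i" "X \<longlonglongrightarrow> x"
  shows "(\<lambda>k. poly_mat_vec (p k) A (X k)) \<longlonglongrightarrow> poly_mat_vec p0 A x"
proof -
  have e: "poly_mat_vec (p k) A (X k) = (\<Sum>i\<le>N. coeff (p k) i *\<^sub>R (mat_pow A i *v X k))" for k
    using pmv_sum_le assms(1) by blast
  have "(\<lambda>k. \<Sum>i\<le>N. coeff (p k) i *\<^sub>R (mat_pow A i *v X k)) \<longlonglongrightarrow> (\<Sum>i\<le>N. coeff p0 i *\<^sub>R (mat_pow A i *v x))"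
  proof (intro tendsto_sum tendsto_scaleR)
    fix i assume "i \<in> {..N}"
    then show "(\<lambda>k. coeff (p k) i) \<longlonglongrightarrow> coeff p0 i" using assms(3) by auto
    show "(\<lambda>k. mat_pow A i *v X k) \<longlonglongrightarrow> mat_pow A i *v x"
      using bounded_linear.tendsto[OF matrix_vector_mul_bounded_linear assms(4)] .
  qed
  then show ?thesis unfolding e using pmv_sum_le[OF assms(2), of A x] by simp
qed

lemma norm_diff_unit:
  fixes a b :: "'a::real_inner"
  assumes "norm a = 1" "norm b = 1"
  shows "(norm (a - b))\<^sup>2 = 2 - 2 * inner a b"
proof -
  have aa: "inner a a = 1" by (metis assms(1) power2_norm_eq_inner power_one)
  have bb: "inner b b = 1" by (metis assms(2) power2_norm_eq_inner power_one)
  show ?thesis using aa bb by (simp add: power2_norm_eq_inner inner_diff_left inner_diff_right inner_commute)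
qed

context
  fixes A :: "real^'n^'n" and s :: nat and v0 :: "real^'n"
  assumes symm: "transpose A = A" and s1: "1 \<le> s" and v0n: "norm v0 = 1"
    and v0k: "nokill A s v0"
begin

lemma v_diff:
  "(\<lambda>k. iter_v A s v0 (Suc (Suc k)) - iter_v A s v0 k) \<longlonglongrightarrow> 0"
proof -
  let ?t = "\<lambda>k. norm (iter_vt A s v0 k)"
  let ?\<tau> = "lim ?t"
  have tc: "?t \<longlonglongrightarrow> ?\<tau>" by (rule t_conv[OF symm s1 v0n v0k])
  have tp: "0 < ?\<tau>" by (rule tau_pos[OF symm s1 v0n v0k])
  have inn: "inner (iter_v A s v0 (Suc (Suc k))) (iter_v A s v0 k) = ?t k / ?t (Suc k)" for k
  proof -
    have "?t k = inner (iter_vt A s v0 (Suc k)) (iter_v A s v0 k)" by (rule t_inner[OF symm s1 v0n v0k])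
    also have "\<dots> = ?t (Suc k) * inner (iter_v A s v0 (Suc (Suc k))) (iter_v A s v0 k)"
      by (subst tv[OF symm s1 v0n v0k]) simp
    finally show ?thesis using tnz[OF symm s1 v0n v0k, of "Suc k"] by (simp add: field_simps)
  qed
  have "(\<lambda>k. ?t k / ?t (Suc k)) \<longlonglongrightarrow> ?\<tau> / ?\<tau>"
    using tc LIMSEQ_Suc[OF tc] tp by (intro tendsto_divide) auto
  then have i1: "(\<lambda>k. inner (iter_v A s v0 (Suc (Suc k))) (iter_v A s v0 k)) \<longlonglongrightarrow> 1"
    using tp by (simp add: inn)
  have "(\<lambda>k. (norm (iter_v A s v0 (Suc (Suc k)) - iter_v A s v0 k))\<^sup>2) \<longlonglongrightarrow> 2 - 2 * 1"
    unfolding norm_diff_unit[OF vn[OF symm s1 v0n v0k] vn[OF symm s1 v0n v0k]]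
    by (intro tendsto_intros i1)
  then have "(\<lambda>k. sqrt ((norm (iter_v A s v0 (Suc (Suc k)) - iter_v A s v0 k))\<^sup>2)) \<longlonglongrightarrow> sqrt 0"
    by (intro tendsto_real_sqrt) simp
  then have "(\<lambda>k. norm (iter_v A s v0 (Suc (Suc k)) - iter_v A s v0 k)) \<longlonglongrightarrow> 0" by simp
  then show ?thesis by (simp add: tendsto_norm_zero_iff)
qed

end



lemma bp_coeff:
  "coeff (monom 1 s + (\<Sum>i<s. monom (f i) i)) j = (if j = s then 1 else if j < s then f j else (0::real))"
  by (auto simp: coeff_sum coeff_monom)

lemma bp_props:
  shows "degree (monom 1 s + (\<Sum>i<s. monom (f i) i)) = s"
    and "monic (monom 1 s + (\<Sum>i<s. monom (f i) i))"
proof -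
  let ?p = "monom 1 s + (\<Sum>i<s. monom (f i) i)"
  have "degree ?p \<le> s" by (rule degree_le) (auto simp del: coeff_add simp: bp_coeff)
  moreover have "s \<le> degree ?p" by (rule le_degree) (simp del: coeff_add add: bp_coeff)
  ultimately show d: "degree ?p = s" by simp
  show "monic ?p" unfolding monic_def using d by (simp del: coeff_add add: bp_coeff)
qed

lemma monic_nz: "monic p \<Longrightarrow> p \<noteq> 0"
  by (auto simp: monic_def)

lemma monic_coeff_top: "monic p \<Longrightarrow> coeff p (degree p) = 1"
  by (simp add: monic_def)



theorem theorem4p2:
  fixes A :: "real^'n^'n" and s :: nat and v0 :: "real^'n" and \<tau> :: real
  assumes symm: "transpose A = A"
    and s_ge: "1 \<le> s" and s_lt: "s < min_poly_deg A"
    and v0_norm: "norm v0 = 1"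
    and v0_grade: "grade A v0 \<ge> s + 1"
    and tau_def: "\<tau> = lim (\<lambda>k. norm (iter_vt A s v0 k))"
  shows "(\<lambda>k. norm (iter_vt A s v0 k)) \<longlonglongrightarrow> \<tau> \<and> \<tau> > 0 \<and>
    (\<forall>vs r. strict_mono r \<longrightarrow> (\<lambda>k. iter_v A s v0 (2 * r k)) \<longlonglongrightarrow> vs \<longrightarrow>
       (let ws = (1 / \<tau>) *\<^sub>R poly_mat_vec (P_s s A vs) A vs;
            Q = P_s s A ws * P_s s A vs
        in poly_mat_vec Q A vs - \<tau>\<^sup>2 *\<^sub>R vs = 0
           \<and> s < grade A vs \<and> grade A vs \<le> 2 * s))"
proof -
  let ?V = "iter_v A s v0" and ?T = "iter_vt A s v0"
  let ?P = "\<lambda>m. P_s s A (iter_v A s v0 m)"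
  have nk0: "nokill A s v0"
    unfolding nokill_def
  proof (intro allI impI notI)
    fix q assume q: "monic q" "degree q = s" "poly_mat_vec q A v0 = 0"
    then have "grade A v0 \<le> s" unfolding grade_def by (intro Least_le) blast
    with v0_grade show False by simp
  qed
  note C = symm s_ge v0_norm nk0
  have tc: "(\<lambda>k. norm (?T k)) \<longlonglongrightarrow> \<tau>" using t_conv[OF C] tau_def by simp
  have tp: "0 < \<tau>" using tau_pos[OF C] tau_def by simp
  have main: "poly_mat_vec (P_s s A ((1 / \<tau>) *\<^sub>R poly_mat_vec (P_s s A vs) A vs) * P_s s A vs) A vs - \<tau>\<^sup>2 *\<^sub>R vs = 0
           \<and> s < grade A vs \<and> grade A vs \<le> 2 * s"
    if r: "strict_mono r" and lim: "(\<lambda>k. ?V (2 * r k)) \<longlonglongrightarrow> vs" for vs r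
  proof -
    obtain K where K: "K \<ge> 1" "\<forall>x. norm (A *v x) \<le> K * norm x" using A_bound_exists by blast
    define \<delta> where "\<delta> = norm (?T 0)"
    have dpos: "0 < \<delta>" unfolding \<delta>_def using tnz[OF C, of 0] by simp
    have LBm: "\<delta> \<le> norm (poly_mat_vec q A (?V m))" if "monic q" "degree q = s" for q m
    proof -
      have "\<delta> \<le> norm (?T m)" unfolding \<delta>_def using t_incseq[OF C] by (simp add: incseq_def)
      also have "\<dots> \<le> norm (poly_mat_vec q A (?V m))" by (rule t_min[OF C that])
      finally show ?thesis .
    qed
    define Bc where "Bc = bnd (K ^ s / \<delta>) (K ^ s) (s - 1) (2 * K ^ s)"
    have cb: "\<bar>coeff (?P m) i\<bar> \<le> Bc" if "i < s" for m i
    proof -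
      let ?r = "?P m - monom 1 s"
      have g: "P_good s A (?V m) (?P m)" by (rule good[OF C])
      have dr: "degree ?r < s"
        using g monom1_monic s_ge monic_diff_deg unfolding P_good_def by blast
      have nm: "norm (poly_mat_vec (monom 1 s) A (?V m)) \<le> K ^ s"
        using monom_bound[OF K(2), of 1 s "?V m"] K(1) vn[OF C] by simp
      have "norm (poly_mat_vec ?r A (?V m)) \<le> norm (?T m) + norm (poly_mat_vec (monom 1 s) A (?V m))"
        unfolding pmv_diff T_eq[OF C] by (rule norm_triangle_ineq4)
      also have "\<dots> \<le> K ^ s + K ^ s"
        using t_min[OF C monom1_monic, of m] nm by simp
      finally have nr: "norm (poly_mat_vec ?r A (?V m)) \<le> 2 * K ^ s" by simp
      have LBu: "\<forall>q. monic q \<longrightarrow> degree q = s \<longrightarrow> \<delta> \<le> norm (poly_mat_vec q A (?V m))"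
        using LBm by blast
      have aux: "\<forall>r C. degree r \<le> s - 1 \<longrightarrow> s - 1 < s \<longrightarrow> norm (poly_mat_vec r A (?V m)) \<le> C \<longrightarrow>
         (\<forall>i\<le>s - 1. \<bar>coeff r i\<bar> \<le> bnd (K ^ s / \<delta>) (K ^ s) (s - 1) C)"
        by (rule coeff_bound_aux[OF K(2) K(1) dpos LBu vn[OF C]])
      have dr': "degree ?r \<le> s - 1" using dr by linarith
      have "\<forall>i\<le>s - 1. \<bar>coeff ?r i\<bar> \<le> Bc"
      proof -
        have "s - 1 < s" using s_ge by linarith
        then show ?thesis unfolding Bc_def using aux dr' nr by blast
      qed
      moreover have "coeff ?r i = coeff (?P m) i" using that by (simp add: coeff_monom)
      ultimately show ?thesis using that
      proof -
        assume a1: "\<forall>i\<le>s - 1. \<bar>coeff ?r i\<bar> \<le> Bc" and a2: "coeff ?r i = coeff (?P m) i"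
        have "i \<le> s - 1" using that by linarith
        then have "\<bar>coeff ?r i\<bar> \<le> Bc" using a1 by blast
        then show ?thesis using a2 by simp
      qed
    qed
    define X where "X = (\<lambda>k i. if i < s then coeff (?P (2 * r k)) i else coeff (?P (2 * r k + 1)) (i - s))"
    have Xb: "\<forall>k i. i < 2 * s \<longrightarrow> \<bar>X k i\<bar> \<le> Bc" unfolding X_def using cb by auto
    obtain r2 where r2: "strict_mono r2" "\<forall>i<2 * s. \<exists>l. (\<lambda>k. X (r2 k) i) \<longlonglongrightarrow> l"
      using subseq_coords[OF Xb] by blast
    have "\<forall>i. \<exists>l. i < 2 * s \<longrightarrow> (\<lambda>k. X (r2 k) i) \<longlonglongrightarrow> l" using r2(2) by blast
    from choice[OF this] obtain L where L: "\<And>i. i < 2 * s \<Longrightarrow> (\<lambda>k. X (r2 k) i) \<longlonglongrightarrow> L i" by blast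
    define h where "h = (\<lambda>k. 2 * r (r2 k))"
    have hmono: "strict_mono h" unfolding h_def strict_mono_def
      using r r2(1) by (simp add: strict_mono_less)
    have Vh: "(\<lambda>k. ?V (h k)) \<longlonglongrightarrow> vs"
      using LIMSEQ_subseq_LIMSEQ[OF lim r2(1)] by (simp add: h_def o_def)
    have cP: "(\<lambda>k. coeff (?P (h k)) i) \<longlonglongrightarrow> L i" if "i < s" for i
      using L[of i] that by (simp add: X_def h_def)
    have cQ: "(\<lambda>k. coeff (?P (h k + 1)) i) \<longlonglongrightarrow> L (s + i)" if "i < s" for i
      using L[of "s + i"] that by (simp add: X_def h_def)
    define ph where "ph = monom 1 s + (\<Sum>i<s. monom (L i) i)"
    define qh where "qh = monom 1 s + (\<Sum>i<s. monom (L (s + i)) i)"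
    have ph: "degree ph = s" "monic ph" unfolding ph_def by (rule bp_props)+
    have qh: "degree qh = s" "monic qh" unfolding qh_def by (rule bp_props)+
    have degP: "degree (?P m) = s" "coeff (?P m) s = 1" for m
      using good[OF C, of m] unfolding P_good_def monic_def by auto
    have ctop: "\<forall>i\<le>s. (\<lambda>k. coeff (?P (f k)) i) \<longlonglongrightarrow> coeff p i"
      if "\<And>i. i < s \<Longrightarrow> (\<lambda>k. coeff (?P (f k)) i) \<longlonglongrightarrow> coeff p i" "coeff p s = 1" for f p
    proof (intro allI impI)
      fix i assume "i \<le> s"
      show "(\<lambda>k. coeff (?P (f k)) i) \<longlonglongrightarrow> coeff p i"
      proof (cases "i = s")
        case True then show ?thesis using that(2) degP by simp
      next
        case False then show ?thesis using that(1) \<open>i \<le> s\<close> by simp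
      qed
    qed
    have cph: "coeff ph i = L i" if "i < s" for i using that unfolding ph_def bp_coeff by simp
    have cqh: "coeff qh i = L (s + i)" if "i < s" for i using that unfolding qh_def bp_coeff by simp
    have ctP: "\<forall>i\<le>s. (\<lambda>k. coeff (?P (h k)) i) \<longlonglongrightarrow> coeff ph i"
      by (rule ctop) (use cP cph ph in \<open>auto simp: monic_def\<close>)
    have ctQ: "\<forall>i\<le>s. (\<lambda>k. coeff (?P (h k + 1)) i) \<longlonglongrightarrow> coeff qh i"
      by (rule ctop[where f = "\<lambda>k. h k + 1"]) (use cQ cqh qh in \<open>auto simp: monic_def\<close>)
    have LBlim: "\<delta> \<le> norm (poly_mat_vec q A u)"
      if "(\<lambda>k. ?V (f k)) \<longlonglongrightarrow> u" "monic q" "degree q = s" for f u q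
    proof (rule LIMSEQ_le_const)
      show "(\<lambda>k. norm (poly_mat_vec q A (?V (f k)))) \<longlonglongrightarrow> norm (poly_mat_vec q A u)"
        by (intro tendsto_norm pmv_tendsto that(1))
      show "\<exists>N. \<forall>n\<ge>N. \<delta> \<le> norm (poly_mat_vec q A (?V (f n)))" using LBm that(2,3) by blast
    qed
    have nklim: "nokill A s u" if "(\<lambda>k. ?V (f k)) \<longlonglongrightarrow> u" for f u
      unfolding nokill_def using LBlim[OF that] dpos by fastforce
    have Plim: "P_s s A u = p \<and> poly_mat_vec p A u = t"
      if Vf: "(\<lambda>k. ?V (f k)) \<longlonglongrightarrow> u" and cf: "\<forall>i\<le>s. (\<lambda>k. coeff (?P (f k)) i) \<longlonglongrightarrow> coeff p i"
        and dp: "degree p = s" "monic p" and Tf: "(\<lambda>k. ?T (f k)) \<longlonglongrightarrow> t" for f u p t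
    proof -
      have T1: "(\<lambda>k. ?T (f k)) \<longlonglongrightarrow> poly_mat_vec p A u"
        unfolding T_eq[OF C] by (rule pmv_tendsto_joint) (use degP dp cf Vf in auto)
      have tt: "poly_mat_vec p A u = t" using LIMSEQ_unique[OF T1 Tf] .
      have orth: "inner (mat_pow A i *v u) (poly_mat_vec p A u) = 0" if "i < s" for i
      proof -
        have z: "inner (mat_pow A i *v ?V (f k)) (?T (f k)) = 0" for k
          using good[OF C, of "f k"] that unfolding P_good_def krylov_orth_iff T_eq[OF C] by blast
        have "(\<lambda>k. inner (mat_pow A i *v ?V (f k)) (?T (f k))) \<longlonglongrightarrow> inner (mat_pow A i *v u) (poly_mat_vec p A u)"
          by (intro tendsto_inner T1 bounded_linear.tendsto[OF matrix_vector_mul_bounded_linear] Vf)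
        then show ?thesis unfolding z using LIMSEQ_unique tendsto_const by metis
      qed
      have "P_good s A u p" unfolding P_good_def krylov_orth_iff using orth dp by auto
      then have "P_s s A u = p" by (rule P_s_eq[OF nklim[OF Vf] s_ge])
      then show ?thesis using tt by simp
    qed
    have nTh: "(\<lambda>k. norm (?T (h k))) \<longlonglongrightarrow> \<tau>"
      using LIMSEQ_subseq_LIMSEQ[OF tc hmono] by (simp add: o_def)
    have Th: "(\<lambda>k. ?T (h k)) \<longlonglongrightarrow> poly_mat_vec ph A vs"
      unfolding T_eq[OF C] by (rule pmv_tendsto_joint) (use degP ph ctP Vh in auto)
    have Pvs: "P_s s A vs = ph" using Plim[OF Vh ctP ph Th] by blast
    define ws where "ws = (1 / \<tau>) *\<^sub>R poly_mat_vec (P_s s A vs) A vs"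
    have Vh1: "(\<lambda>k. ?V (h k + 1)) \<longlonglongrightarrow> ws"
    proof -
      have "(\<lambda>k. (1 / norm (?T (h k))) *\<^sub>R ?T (h k)) \<longlonglongrightarrow> (1 / \<tau>) *\<^sub>R poly_mat_vec ph A vs"
        using tp by (intro tendsto_intros nTh Th) simp
      then show ?thesis unfolding ws_def Pvs by (simp add: iter_v_Suc')
    qed
    have nTh1: "(\<lambda>k. norm (?T (h k + 1))) \<longlonglongrightarrow> \<tau>"
      using LIMSEQ_subseq_LIMSEQ[OF tc strict_mono_o[OF _ hmono, of Suc]] by (simp add: o_def strict_mono_Suc_iff)
    have Th1: "(\<lambda>k. ?T (h k + 1)) \<longlonglongrightarrow> poly_mat_vec qh A ws"
      unfolding T_eq[OF C] by (rule pmv_tendsto_joint) (use degP qh ctQ Vh1 in auto)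
    have Pws: "P_s s A ws = qh" using Plim[OF Vh1 ctQ qh Th1] by blast
    have Z1: "(\<lambda>k. poly_mat_vec (?P (h k + 1)) A (?T (h k))) \<longlonglongrightarrow> poly_mat_vec qh A (poly_mat_vec ph A vs)"
      by (rule pmv_tendsto_joint) (use degP qh ctQ Th in auto)
    have Zeq: "poly_mat_vec (?P (h k + 1)) A (?T (h k)) = (norm (?T (h k)) * norm (?T (h k + 1))) *\<^sub>R ?V (h k + 2)" for k
    proof -
      have "poly_mat_vec (?P (h k + 1)) A (?T (h k)) = norm (?T (h k)) *\<^sub>R ?T (h k + 1)"
        by (subst tv[OF C]) (simp add: pmv_vscale T_eq[OF C])
      also have "\<dots> = (norm (?T (h k)) * norm (?T (h k + 1))) *\<^sub>R ?V (h k + 2)"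
        by (subst tv[OF C]) simp
      finally show ?thesis .
    qed
    have V2: "(\<lambda>k. ?V (h k + 2)) \<longlonglongrightarrow> vs"
    proof -
      have "(\<lambda>k. (?V (Suc (Suc (h k))) - ?V (h k)) + ?V (h k)) \<longlonglongrightarrow> 0 + vs"
        using LIMSEQ_subseq_LIMSEQ[OF v_diff[OF C] hmono] Vh by (intro tendsto_add) (simp_all add: o_def)
      then show ?thesis by simp
    qed
    have Z2: "(\<lambda>k. poly_mat_vec (?P (h k + 1)) A (?T (h k))) \<longlonglongrightarrow> (\<tau> * \<tau>) *\<^sub>R vs"
      unfolding Zeq by (intro tendsto_intros nTh nTh1 V2)
    have QV: "poly_mat_vec (qh * ph) A vs = \<tau>\<^sup>2 *\<^sub>R vs"
      using LIMSEQ_unique[OF Z1 Z2] by (simp add: pmv_mult power2_eq_square)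
    define R where "R = qh * ph - [:\<tau>\<^sup>2:]"
    have dQ: "degree (qh * ph) = 2 * s" using degree_mult_eq[OF monic_nz[OF qh(2)] monic_nz[OF ph(2)]] ph qh by simp
    have lQ: "lead_coeff (qh * ph) = 1" using ph(2) qh(2) by (simp add: lead_coeff_mult monic_def)
    have dR: "degree R = 2 * s"
    proof -
      have "degree (qh * ph + (- [:\<tau>\<^sup>2:])) = 2 * s"
        by (subst degree_add_eq_left) (use dQ s_ge in simp_all)
      then show ?thesis unfolding R_def diff_conv_add_uminus .
    qed
    have mR: "monic R" unfolding monic_def using dR lQ dQ s_ge by (simp add: R_def coeff_pCons')
    have kR: "poly_mat_vec R A vs = 0" unfolding R_def by (simp add: pmv_diff QV)
    have ex: "\<exists>p. monic p \<and> degree p = 2 * s \<and> poly_mat_vec p A vs = 0" using mR dR kR by blast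
    have g1: "grade A vs \<le> 2 * s" unfolding grade_def by (rule Least_le) (use ex in blast)
    obtain p0 where p0: "monic p0" "degree p0 = grade A vs" "poly_mat_vec p0 A vs = 0"
      using LeastI[of "\<lambda>k. \<exists>p. monic p \<and> degree p = k \<and> poly_mat_vec p A vs = 0" "2 * s", OF ex]
      unfolding grade_def by blast
    have g2: "s < grade A vs"
    proof (rule ccontr)
      assume "\<not> s < grade A vs"
      then have "degree p0 \<le> s" using p0(2) by simp
      then show False using nokill_nonzero[OF nklim[OF Vh] monic_nz[OF p0(1)]] p0(3) by blast
    qed
    show ?thesis using QV g1 g2 Pws Pvs unfolding ws_def by simp
  qed
  show ?thesis unfolding Let_def using tc tp main by blast
qed

end
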